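(* Let $A$ and $B$ be nonempty proper subsets of $R_n$. Let $d_A^{\perp}$ be the minimum distance of the dual of the cyclic code of length $n$ over $\mathbb{F}_{q^d}$ with complete defining set $A$, and let $d_B$ be the minimum distance of the cyclic code of length $n$ over $\mathbb{F}_{q^d}$ with complete defining set $B$, and suppose $d_A^{\perp}\ge d_B$. If $C$ is a cyclic code of length $n$ over $\mathbb{F}_q$ whose complete defining set contains $AB$, then $C$ has $(d_A^{\perp}-d_B+1,\,d_B)$-locality.
   Context: Let $q$ be a prime power and $n$ a positive integer with $\gcd(n,q)=1$. Let $d$ be the multiplicative order of $q$ modulo $n$, $\alpha\in\mathbb{F}_{q^d}$ a primitive $n$-th root of unity, and $R_n=\{\alpha^j:0\le j\le n-1\}$. For $A,B\subseteq R_n$, $AB=\{\beta\gamma:\beta\in A,\gamma\in B\}$. For any $Z\subseteq R_n$, the cyclic code of length $n$ over $\mathbb{F}_{q^d}$ with complete defining set $Z$ is the ideal generated by $\prod_{\beta\in Z}(x-\beta)$ in $\mathbb{F}_{q^d}[x]/(x^n-1)$, identified with a subspace of $\mathbb{F}_{q^d}^n$ via coefficient vectors. A cyclic code of length $n$ over $\mathbb{F}_q$ is an ideal $\langle g(x)\rangle$ of $\mathbb{F}_q[x]/(x^n-1)$ with $g\mid x^n-1$ monic; its complete defining set is the set of roots of $g$ in $R_n$. Locality: for a linear code $C\subseteq\mathbb{F}^n$ and integers $r\ge1$, $\delta\ge2$, the $i$-th coordinate has $(r,\delta)$-locality if there is $S_i\subseteq\{1,\dots,n\}$ with $i\in S_i$,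 $|S_i|\le r+\delta-1$ such that the punctured code $C|_{S_i}$ (restrictions of codewords to $S_i$) has minimum distance at least $\delta$ (the zero code having infinite minimum distance); $C$ has $(r,\delta)$-locality if every coordinate does. *)

theory Defs
  imports "HOL-Number_Theory.Number_Theory" "HOL-Computational_Algebra.Polynomial"
    "HOL-Library.Extended_Nat"
begin

text \<open>Vectors of length n are functions nat => 'a; only coordinates 0..n-1 matter
  (codewords vanish outside). Coordinates are indexed 0..n-1 instead of 1..n.\<close>

definition hweight :: "nat \<Rightarrow> (nat \<Rightarrow> 'a::zero) \<Rightarrow> nat" where
  "hweight n c = card {i. i < n \<and> c i \<noteq> 0}"

text \<open>Minimum distance; the zero code has infinite minimum distance.\<close>
definition min_dist :: "nat \<Rightarrow> (nat \<Rightarrow> 'a::zero) set \<Rightarrow> enat" where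
  "min_dist n C = (INF c \<in> {c \<in> C. \<exists>i<n. c i \<noteq> 0}. enat (hweight n c))"

definition vec_of :: "'a::zero poly \<Rightarrow> nat \<Rightarrow> 'a" where
  "vec_of p = (\<lambda>i. coeff p i)"

definition xn1 :: "nat \<Rightarrow> 'a::comm_ring_1 poly" where
  "xn1 n = monom 1 n - 1"

text \<open>Ideal generated by g in K[x]/(x^n-1), where K is the coefficient subfield
  given as a subset (elements of the quotient represented by their reduced
  representatives of degree < n), as a set of coefficient vectors.\<close>
definition ideal_code :: "'a::field set \<Rightarrow> nat \<Rightarrow> 'a poly \<Rightarrow> (nat \<Rightarrow> 'a) set" where
  "ideal_code K n g =
     {vec_of ((a * g) mod xn1 n) | a. (\<forall>i. coeff a i \<in> K)}"

definition cyclic_code_defset :: "nat \<Rightarrow> 'a::field set \<Rightarrow> (nat \<Rightarrow> 'a) set" where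
  "cyclic_code_defset n Z = ideal_code UNIV n (\<Prod>\<beta>\<in>Z. [:- \<beta>, 1:])"

definition dual_code :: "nat \<Rightarrow> (nat \<Rightarrow> 'a::field) set \<Rightarrow> (nat \<Rightarrow> 'a) set" where
  "dual_code n C = {v. (\<forall>i\<ge>n. v i = 0) \<and> (\<forall>c\<in>C. (\<Sum>i<n. v i * c i) = 0)}"

definition roots_Rn :: "nat \<Rightarrow> 'a::field \<Rightarrow> 'a set" where
  "roots_Rn n \<alpha> = {\<alpha> ^ j | j. j < n}"

definition setprod :: "'a::times set \<Rightarrow> 'a set \<Rightarrow> 'a set" where
  "setprod A B = {b * c | b c. b \<in> A \<and> c \<in> B}"

definition subfield_q :: "nat \<Rightarrow> 'a::field set" where
  "subfield_q q = {x. x ^ q = x}"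

definition is_cyclic_code_gen :: "'a::field set \<Rightarrow> nat \<Rightarrow> 'a poly \<Rightarrow> (nat \<Rightarrow> 'a) set \<Rightarrow> bool" where
  "is_cyclic_code_gen K n g C \<longleftrightarrow>
     (\<forall>i. coeff g i \<in> K) \<and> lead_coeff g = 1 \<and>
     (\<exists>h. (\<forall>i. coeff h i \<in> K) \<and> g * h = xn1 n) \<and>
     C = ideal_code K n g"

definition complete_defset :: "nat \<Rightarrow> 'a::field \<Rightarrow> 'a poly \<Rightarrow> 'a set" where
  "complete_defset n \<alpha> g = {\<beta> \<in> roots_Rn n \<alpha>. poly g \<beta> = 0}"

definition punct :: "(nat \<Rightarrow> 'a::zero) set \<Rightarrow> nat set \<Rightarrow> (nat \<Rightarrow> 'a) set" where
  "punct C S = (\<lambda>c i. if i \<in> S then c i else 0) ` C"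

definition coord_locality :: "nat \<Rightarrow> (nat \<Rightarrow> 'a::zero) set \<Rightarrow> nat \<Rightarrow> nat \<Rightarrow> nat \<Rightarrow> bool" where
  "coord_locality n C r \<delta> i \<longleftrightarrow>
     (\<exists>S. S \<subseteq> {..<n} \<and> i \<in> S \<and> card S \<le> r + \<delta> - 1 \<and>
          min_dist n (punct C S) \<ge> enat \<delta>)"

definition has_locality :: "nat \<Rightarrow> (nat \<Rightarrow> 'a::zero) set \<Rightarrow> nat \<Rightarrow> nat \<Rightarrow> bool" where
  "has_locality n C r \<delta> \<longleftrightarrow> r \<ge> 1 \<and> \<delta> \<ge> 2 \<and> (\<forall>i<n. coord_locality n C r \<delta> i)"

end

theory Submission
  imports Defs
begin


definition ev :: "nat \<Rightarrow> (nat \<Rightarrow> 'a::comm_ring_1) \<Rightarrow> 'a \<Rightarrow> 'a" where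
  "ev n v x = (\<Sum>k<n. v k * x ^ k)"

lemma enat_Inf_in: "X \<noteq> {} \<Longrightarrow> Inf (X::enat set) \<in> X"
  unfolding Inf_enat_def by (auto intro: LeastI_ex)

lemma min_dist_attained:
  assumes "c \<in> C" "i < n" "c i \<noteq> 0"
  shows "\<exists>c'\<in>C. (\<exists>i<n. c' i \<noteq> 0) \<and> min_dist n C = enat (hweight n c')"
proof -
  let ?X = "(\<lambda>c. enat (hweight n c)) ` {c \<in> C. \<exists>i<n. c i \<noteq> 0}"
  have "?X \<noteq> {}" using assms by auto
  then have "Inf ?X \<in> ?X" by (rule enat_Inf_in)
  then show ?thesis unfolding min_dist_def by auto
qed

lemma min_dist_geI:
  assumes "\<And>c. c \<in> C \<Longrightarrow> (\<exists>i<n. c i \<noteq> 0) \<Longrightarrow> \<delta> \<le> hweight n c"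
  shows "enat \<delta> \<le> min_dist n C"
  unfolding min_dist_def using assms by (force intro!: INF_greatest)

lemma min_dist_le:
  assumes "c \<in> C" "\<exists>i<n. c i \<noteq> 0"
  shows "min_dist n C \<le> enat (hweight n c)"
  unfolding min_dist_def using assms by (auto intro!: INF_lower)

lemma degree_xn1: "n > 0 \<Longrightarrow> degree (xn1 n :: 'a::field poly) = n"
proof -
  assume n: "n > 0"
  have "monom (1::'a) n - 1 = monom 1 n + (- 1)" by simp
  also have "degree \<dots> = n" using n by (subst degree_add_eq_left) (auto simp: degree_monom_eq)
  finally show ?thesis unfolding xn1_def .
qed

lemma poly_xn1: "x ^ n = 1 \<Longrightarrow> poly (xn1 n) x = 0"
  unfolding xn1_def by (simp add: poly_monom)

lemma ev_vec_of:
  assumes "degree p < n"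
  shows "ev n (vec_of p) x = poly p x"
proof -
  have "poly p x = (\<Sum>i\<le>degree p. coeff p i * x ^ i)" by (rule poly_altdef)
  also have "\<dots> = (\<Sum>i<n. coeff p i * x ^ i)"
    apply (rule sum.mono_neutral_left) using assms by (auto simp: coeff_eq_0)
  finally show ?thesis by (simp add: ev_def vec_of_def)
qed

lemma mod_xn1_deg:
  assumes "n > 0" shows "degree (p mod xn1 n :: 'a::field poly) < n"
proof -
  have ne: "xn1 n \<noteq> (0::'a poly)" using degree_xn1[OF assms] assms by (metis degree_0 less_numeral_extra(3))
  have "degree (xn1 n :: 'a poly) = n" by (rule degree_xn1[OF assms])
  then show ?thesis using degree_mod_less[OF ne, of p] assms by auto
qed

lemma poly_mod_xn1: "x ^ n = 1 \<Longrightarrow> poly (p mod xn1 n) x = poly (p::'a::field poly) x"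
proof -
  assume h: "x ^ n = 1"
  have "p = xn1 n * (p div xn1 n) + p mod xn1 n" by simp
  then have "poly p x = poly (xn1 n) x * poly (p div xn1 n) x + poly (p mod xn1 n) x"
    by (metis poly_add poly_mult)
  then show ?thesis using poly_xn1[OF h] by simp
qed

lemma ideal_code_zero:
  assumes "c \<in> ideal_code K n g" "n > 0" "i \<ge> n" shows "c i = 0"
proof -
  obtain a where c: "c = vec_of ((a * g) mod xn1 n)" using assms(1) unfolding ideal_code_def by auto
  show ?thesis unfolding c vec_of_def using mod_xn1_deg[OF assms(2), of "a*g"] assms(3)
    by (intro coeff_eq_0) simp
qed

lemma ideal_code_ev:
  assumes "c \<in> ideal_code K n g" "n > 0" "x ^ n = 1" "poly g x = 0" shows "ev n c x = 0"
proof -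
  obtain a where c: "c = vec_of ((a * g) mod xn1 n)" using assms(1) unfolding ideal_code_def by auto
  show ?thesis unfolding c ev_vec_of[OF mod_xn1_deg[OF assms(2)]] poly_mod_xn1[OF assms(3)]
    using assms(4) by simp
qed

lemma prod_lin_dvd:
  assumes "finite Z" "\<forall>\<beta>\<in>Z. poly p \<beta> = 0"
  shows "(\<Prod>\<beta>\<in>Z. [:- \<beta>, 1:]) dvd (p::'a::field poly)"
  using assms
proof (induction Z arbitrary: p rule: finite_induct)
  case empty then show ?case by simp
next
  case (insert b Z)
  have "(\<Prod>\<beta>\<in>Z. [:- \<beta>, 1:]) dvd p" using insert.IH[of p] insert.prems by auto
  then obtain r where r: "p = (\<Prod>\<beta>\<in>Z. [:- \<beta>, 1:]) * r" by (auto elim: dvdE)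
  have nz: "poly (\<Prod>\<beta>\<in>Z. [:- \<beta>, 1:]) b \<noteq> 0" using insert(1,2)
    by (auto simp: poly_prod)
  have "poly p b = 0" using insert by auto
  then have "poly r b = 0" using nz r by simp
  then obtain s where s: "r = [:- b, 1:] * s" using poly_eq_0_iff_dvd by (metis dvdE)
  have "p = ([:- b, 1:] * (\<Prod>\<beta>\<in>Z. [:- \<beta>, 1:])) * s" using r s by (simp only: mult_ac)
  then have "([:- b, 1:] * (\<Prod>\<beta>\<in>Z. [:- \<beta>, 1:])) dvd p" by (rule dvdI)
  then show ?case using insert(1,2) by simp
qed

definition polyv :: "nat \<Rightarrow> (nat \<Rightarrow> 'a::comm_ring_1) \<Rightarrow> 'a poly" where
  "polyv n v = (\<Sum>k<n. monom (v k) k)"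

lemma coeff_polyv: "coeff (polyv n v) i = (if i < n then v i else 0)"
  unfolding polyv_def by (simp add: coeff_sum coeff_monom)

lemma poly_polyv: "poly (polyv n v) x = ev n v x"
  unfolding polyv_def ev_def by (simp add: poly_sum poly_monom)

lemma degree_polyv: "n > 0 \<Longrightarrow> degree (polyv n v) < n"
proof -
  assume "n > 0"
  have "degree (polyv n v) \<le> n - 1" by (rule degree_le) (auto simp: coeff_polyv)
  then show ?thesis using \<open>n > 0\<close> by simp
qed

lemma code_char:
  fixes Z :: "'a::{field,finite} set"
  assumes "n > 0" "\<forall>\<beta>\<in>Z. \<beta> ^ n = 1"
  shows "cyclic_code_defset n Z = {v. (\<forall>i\<ge>n. v i = 0) \<and> (\<forall>\<beta>\<in>Z. ev n v \<beta> = 0)}"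
proof (rule Set.set_eqI, rule iffI)
  fix v assume v: "v \<in> cyclic_code_defset n Z"
  show "v \<in> {v. (\<forall>i\<ge>n. v i = 0) \<and> (\<forall>\<beta>\<in>Z. ev n v \<beta> = 0)}"
  proof (intro CollectI conjI allI ballI impI)
    fix i assume "i \<ge> n" then show "v i = 0"
      using v ideal_code_zero[OF _ assms(1)] unfolding cyclic_code_defset_def by blast
  next
    fix \<beta> assume b: "\<beta> \<in> Z"
    have "poly (\<Prod>\<beta>\<in>Z. [:- \<beta>, 1:]) \<beta> = 0" using b by (simp add: poly_prod prod_zero_iff)
    then show "ev n v \<beta> = 0"
      using v ideal_code_ev[OF _ assms(1)] assms(2) b unfolding cyclic_code_defset_def by blast
  qed
next
  fix v assume v: "v \<in> {v. (\<forall>i\<ge>n. v i = 0) \<and> (\<forall>\<beta>\<in>Z. ev n v \<beta> = 0)}"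
  let ?p = "polyv n v"
  have "(\<Prod>\<beta>\<in>Z. [:- \<beta>, 1:]) dvd ?p"
    by (rule prod_lin_dvd) (use v in \<open>auto simp: poly_polyv\<close>)
  then obtain k where k: "?p = (\<Prod>\<beta>\<in>Z. [:- \<beta>, 1:]) * k" by (auto elim: dvdE)
  have "?p mod xn1 n = ?p"
    by (rule mod_poly_less) (use degree_polyv[OF assms(1), of v] degree_xn1[OF assms(1), where 'a='a] in auto)
  moreover have "vec_of ?p = v" using v by (auto simp: vec_of_def coeff_polyv fun_eq_iff)
  ultimately have "v = vec_of ((k * (\<Prod>\<beta>\<in>Z. [:- \<beta>, 1:])) mod xn1 n)"
    using k by (simp add: mult.commute)
  then show "v \<in> cyclic_code_defset n Z"
    unfolding cyclic_code_defset_def ideal_code_def by blast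
qed


definition sh :: "nat \<Rightarrow> nat \<Rightarrow> (nat \<Rightarrow> 'a::zero) \<Rightarrow> nat \<Rightarrow> 'a" where
  "sh n s v k = (if k < n then v ((k + s) mod n) else 0)"

lemma inv_mod: "k < n \<Longrightarrow> t < n \<Longrightarrow> ((k + t) mod n + (n - t)) mod n = (k::nat)"
proof -
  assume "k < n" "t < n"
  have "((k + t) mod n + (n - t)) mod n = (k + t + (n - t)) mod n" by (simp add: mod_add_left_eq)
  also have "k + t + (n - t) = k + n" using \<open>t < n\<close> by simp
  finally show ?thesis using \<open>k < n\<close> by simp
qed

lemma pow_mod: "x ^ n = 1 \<Longrightarrow> x ^ k = x ^ (k mod n)" for x :: "'a::monoid_mult"
proof -
  assume h: "x ^ n = 1"
  have "x ^ k = x ^ (n * (k div n) + k mod n)" by simp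
  also have "\<dots> = (x ^ n) ^ (k div n) * x ^ (k mod n)" by (simp only: power_add power_mult)
  also have "\<dots> = x ^ (k mod n)" by (simp only: h power_one mult_1)
  finally show ?thesis .
qed

lemma reidx:
  fixes t n :: nat
  assumes "t < n"
  shows "(\<Sum>k<n. h ((k + t) mod n) k) = (\<Sum>m<n. h m ((m + (n - t)) mod n))"
proof (rule sum.reindex_bij_witness[where j = "\<lambda>k. (k + t) mod n" and i = "\<lambda>m. (m + (n - t)) mod n"])
  fix k assume "k \<in> {..<n}" then have "k < n" by simp
  then show "((k + t) mod n + (n - t)) mod n = k" using assms by (rule inv_mod)
next
  fix k assume "k \<in> {..<n}" then show "(k + t) mod n \<in> {..<n}" by auto
next
  fix m assume m: "m \<in> {..<n}"
  have "((m + (n - t)) mod n + t) mod n = (m + (n - t) + t) mod n" by (simp only: mod_add_left_eq)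
  also have "m + (n - t) + t = m + n" using assms by simp
  finally show "((m + (n - t)) mod n + t) mod n = m" using m by simp
next
  fix m assume "m \<in> {..<n}" then show "(m + (n - t)) mod n \<in> {..<n}" by auto
next
  fix k assume k: "k \<in> {..<n}"
  have "k < n" using k by simp
  then have e: "((k + t) mod n + (n - t)) mod n = k" using assms by (rule inv_mod)
  show "h ((k + t) mod n) (((k + t) mod n + (n - t)) mod n) = h ((k + t) mod n) k"
    by (simp only: e)
qed

lemma reidx1:
  fixes n s :: nat
  assumes "n > 0"
  shows "(\<Sum>k<n. F ((k + s) mod n)) = (\<Sum>m<n. F m)"
proof -
  have "(\<Sum>k<n. F ((k + s) mod n)) = (\<Sum>k<n. F ((k + s mod n) mod n))"
    by (intro sum.cong refl) (metis mod_add_right_eq)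
  also have "\<dots> = (\<Sum>m<n. F m)"
    using reidx[of "s mod n" n "\<lambda>a b. F a"] assms by simp
  finally show ?thesis .
qed

lemma ev_shift:
  fixes \<gamma> :: "'a::field"
  assumes n: "n > 0" and g: "\<gamma> ^ n = 1" and e: "ev n v \<gamma> = 0"
  shows "ev n (sh n s v) \<gamma> = 0"
proof -
  have ne: "\<gamma> \<noteq> 0" using g n by (metis power_0_left less_not_refl2 zero_neq_one)
  have "\<gamma> ^ s * ev n (sh n s v) \<gamma> = (\<Sum>k<n. \<gamma> ^ s * (sh n s v k * \<gamma> ^ k))"
    by (simp add: ev_def sum_distrib_left)
  also have "\<dots> = (\<Sum>k<n. v ((k + s) mod n) * \<gamma> ^ (k + s))"
    by (intro sum.cong refl) (simp add: sh_def power_add)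
  also have "\<dots> = (\<Sum>k<n. v ((k + s) mod n) * \<gamma> ^ ((k + s) mod n))"
    by (intro sum.cong refl, subst pow_mod[OF g], rule refl)
  also have "\<dots> = (\<Sum>m<n. v m * \<gamma> ^ m)" by (rule reidx1[OF n, where F = "\<lambda>m. v m * \<gamma> ^ m"])
  also have "\<dots> = 0" using e by (simp add: ev_def)
  finally show ?thesis using ne by simp
qed


lemma weight_ge2:
  fixes v :: "nat \<Rightarrow> 'a::field"
  assumes ev0: "ev n v \<beta> = 0" and b: "\<beta> ^ n = 1" and n: "n > 0"
    and nz: "j < n" "v j \<noteq> 0"
  shows "2 \<le> hweight n v"
proof (rule ccontr)
  assume "\<not> 2 \<le> hweight n v"
  then have le: "card {i. i < n \<and> v i \<noteq> 0} \<le> 1" unfolding hweight_def by simp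
  have fin: "finite {i. i < n \<and> v i \<noteq> 0}" by simp
  have jin: "j \<in> {i. i < n \<and> v i \<noteq> 0}" using nz by simp
  have single: "{i. i < n \<and> v i \<noteq> 0} = {j}"
  proof -
    have "card {i. i < n \<and> v i \<noteq> 0} = 1" using le jin fin
      by (metis One_nat_def card_0_eq empty_iff le_antisym less_one not_le)
    then obtain x where "{i. i < n \<and> v i \<noteq> 0} = {x}" by (auto simp: card_Suc_eq)
    then show ?thesis using jin by auto
  qed
  have "ev n v \<beta> = (\<Sum>k\<in>{j}. v k * \<beta> ^ k)"
    unfolding ev_def
    by (rule sum.mono_neutral_right) (use nz single in auto)
  then have "ev n v \<beta> = v j * \<beta> ^ j" by simp
  moreover have "\<beta> \<noteq> 0" using b n by (metis power_0_left less_not_refl2 zero_neq_one)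
  ultimately show False using ev0 nz by simp
qed

lemma card_roots: "card (roots_Rn n \<alpha>) \<le> n"
proof -
  have "roots_Rn n \<alpha> = (\<lambda>j. \<alpha> ^ j) ` {..<n}" unfolding roots_Rn_def by auto
  then show ?thesis using card_image_le[of "{..<n}" "\<lambda>j. \<alpha> ^ j"] by simp
qed

lemma roots_pow: "\<alpha> ^ n = 1 \<Longrightarrow> \<beta> \<in> roots_Rn n \<alpha> \<Longrightarrow> \<beta> ^ n = (1::'a::field)"
proof -
  assume a: "\<alpha> ^ n = 1" and "\<beta> \<in> roots_Rn n \<alpha>"
  then obtain j where "\<beta> = \<alpha> ^ j" unfolding roots_Rn_def by auto
  then have "\<beta> ^ n = (\<alpha> ^ n) ^ j" by (simp only: power_mult[symmetric] mult.commute)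
  then show ?thesis using a by simp
qed



theorem theorem3p3:
  fixes q n d :: nat and \<alpha> :: "'a::{field,finite}"
    and A B :: "'a set" and C :: "(nat \<Rightarrow> 'a) set" and g :: "'a poly"
  assumes q_pp: "\<exists>p k. prime p \<and> k > 0 \<and> q = p ^ k"
    and n_pos: "n > 0"
    and cop: "coprime n q"
    and d_def: "d = ord n q"
    and card_field: "card (UNIV :: 'a set) = q ^ d"
    and alpha_root: "\<alpha> ^ n = 1"
    and alpha_prim: "\<forall>k. 0 < k \<and> k < n \<longrightarrow> \<alpha> ^ k \<noteq> 1"
    and A_sub: "A \<subseteq> roots_Rn n \<alpha>" and A_ne: "A \<noteq> {}" and A_prop: "A \<noteq> roots_Rn n \<alpha>"
    and B_sub: "B \<subseteq> roots_Rn n \<alpha>" and B_ne: "B \<noteq> {}" and B_prop: "B \<noteq> roots_Rn n \<alpha>"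
    and dist_ge: "min_dist n (dual_code n (cyclic_code_defset n A))
                    \<ge> min_dist n (cyclic_code_defset n B)"
    and C_cyc: "is_cyclic_code_gen (subfield_q q) n g C"
    and AB_sub: "setprod A B \<subseteq> complete_defset n \<alpha> g"
  shows "has_locality n C
           (the_enat (min_dist n (dual_code n (cyclic_code_defset n A)))
              - the_enat (min_dist n (cyclic_code_defset n B)) + 1)
           (the_enat (min_dist n (cyclic_code_defset n B)))"
proof -
  define CA where "CA = cyclic_code_defset n A"
  define CB where "CB = cyclic_code_defset n B"
  define DA where "DA = dual_code n CA"
  have rA: "\<forall>\<beta>\<in>A. \<beta> ^ n = 1" using A_sub roots_pow[OF alpha_root] by blast
  have rB: "\<forall>\<beta>\<in>B. \<beta> ^ n = 1" using B_sub roots_pow[OF alpha_root] by blast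
  have CA_char: "CA = {v. (\<forall>i\<ge>n. v i = 0) \<and> (\<forall>\<beta>\<in>A. ev n v \<beta> = 0)}"
    unfolding CA_def by (rule code_char[OF n_pos rA])
  have CB_char: "CB = {v. (\<forall>i\<ge>n. v i = 0) \<and> (\<forall>\<beta>\<in>B. ev n v \<beta> = 0)}"
    unfolding CB_def by (rule code_char[OF n_pos rB])
  have C_def': "C = ideal_code (subfield_q q) n g" using C_cyc unfolding is_cyclic_code_gen_def by blast
  obtain \<beta>0 where b0: "\<beta>0 \<in> A" using A_ne by blast
  define a0 where "a0 = (\<lambda>k. if k < n then \<beta>0 ^ k else 0)"
  have a0_in: "a0 \<in> DA"
    unfolding DA_def dual_code_def
  proof (intro CollectI conjI allI impI ballI)
    fix i assume "i \<ge> n" then show "a0 i = 0" by (simp add: a0_def)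
  next
    fix c assume "c \<in> CA"
    then have "ev n c \<beta>0 = 0" using CA_char b0 by blast
    then show "(\<Sum>i<n. a0 i * c i) = 0" by (simp add: ev_def a0_def mult.commute)
  qed
  obtain a where a_in: "a \<in> DA" and a_nz: "\<exists>i<n. a i \<noteq> 0"
    and a_min: "min_dist n DA = enat (hweight n a)"
    using min_dist_attained[OF a0_in n_pos] n_pos by (auto simp: a0_def)
  define D where "D = hweight n a"
  define gB where "gB = (\<Prod>\<beta>\<in>B. [:- \<beta>, 1:])"
  have gB_nz: "gB \<noteq> 0" unfolding gB_def by (simp add: prod_zero_iff)
  have "card B < card (roots_Rn n \<alpha>)"
    using B_sub B_prop by (simp add: psubset_card_mono)
  then have cardB: "card B < n" using card_roots[of n \<alpha>] by simp
  have "degree gB \<le> sum (degree \<circ> (\<lambda>\<beta>. [:- \<beta>, 1:])) B"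
    unfolding gB_def by (rule degree_prod_sum_le) simp
  then have degB: "degree gB < n" using cardB by simp
  have gB_in: "vec_of gB \<in> CB"
    unfolding CB_char
  proof (intro CollectI conjI allI impI ballI)
    fix i assume "i \<ge> n" then show "vec_of gB i = 0" using degB by (simp add: vec_of_def coeff_eq_0)
  next
    fix \<beta> assume "\<beta> \<in> B"
    then have "poly gB \<beta> = 0" unfolding gB_def by (simp add: poly_prod prod_zero_iff)
    then show "ev n (vec_of gB) \<beta> = 0" by (simp only: ev_vec_of[OF degB])
  qed
  have "vec_of gB (degree gB) \<noteq> 0" using gB_nz by (simp add: vec_of_def)
  then obtain b where b_in: "b \<in> CB" and b_nz: "\<exists>i<n. b i \<noteq> 0"
    and b_min: "min_dist n CB = enat (hweight n b)"
    using min_dist_attained[OF gB_in degB] by auto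
  define \<delta> where "\<delta> = hweight n b"
  obtain \<beta>1 where b1: "\<beta>1 \<in> B" using B_ne by blast
  have wt2: "2 \<le> hweight n v" if "v \<in> CB" "j < n" "v j \<noteq> 0" for v j
    using weight_ge2[of n v \<beta>1 j] that CB_char b1 rB n_pos by blast
  have d2: "\<delta> \<ge> 2" using b_nz b_in wt2 unfolding \<delta>_def by blast
  have Dd: "\<delta> \<le> D" using dist_ge a_min b_min unfolding D_def \<delta>_def CA_def CB_def DA_def by simp
  have loc: "coord_locality n C (D - \<delta> + 1) \<delta> i" if i: "i < n" for i
  proof -
    obtain j where j: "j < n" "a j \<noteq> 0" using a_nz by blast
    define t where "t = (j + n - i) mod n"
    have tn: "t < n" unfolding t_def using n_pos by simp
    define a' where "a' = sh n t a"
    define S where "S = {k. k < n \<and> a' k \<noteq> 0}"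
    have ij: "(i + t) mod n = j"
    proof -
      have "(i + t) mod n = (i + (j + n - i)) mod n" unfolding t_def by (simp add: mod_add_right_eq)
      also have "i + (j + n - i) = j + n" using i by simp
      finally show ?thesis using j by simp
    qed
    have iS: "i \<in> S" unfolding S_def a'_def sh_def using i ij j by simp
    have cardS: "card S \<le> D"
    proof -
      have "inj_on (\<lambda>k. (k + t) mod n) S"
      proof (rule inj_onI)
        fix x y assume xs: "x \<in> S" and ys: "y \<in> S" and eq: "(x + t) mod n = (y + t) mod n"
        have xn: "x < n" using xs unfolding S_def by simp
        have yn: "y < n" using ys unfolding S_def by simp
        have "x = ((x + t) mod n + (n - t)) mod n" using inv_mod[OF xn tn] by simp
        also have "\<dots> = ((y + t) mod n + (n - t)) mod n" using eq by simp
        also have "\<dots> = y" using inv_mod[OF yn tn] .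
        finally show "x = y" .
      qed
      moreover have "(\<lambda>k. (k + t) mod n) ` S \<subseteq> {k. k < n \<and> a k \<noteq> 0}"
        unfolding S_def a'_def sh_def using n_pos by auto
      ultimately show ?thesis unfolding D_def hweight_def
        by (intro card_inj_on_le) auto
    qed
    have a'_dual: "(\<Sum>k<n. a' k * c k) = 0" if c: "c \<in> CA" for c
    proof -
      have "(\<Sum>k<n. a' k * c k) = (\<Sum>k<n. a ((k + t) mod n) * c k)"
        by (intro sum.cong refl) (simp add: a'_def sh_def)
      also have "\<dots> = (\<Sum>m<n. a m * c ((m + (n - t)) mod n))"
        by (rule reidx[OF tn, where h = "\<lambda>x y. a x * c y"])
      also have "\<dots> = (\<Sum>m<n. a m * sh n (n - t) c m)"
        by (intro sum.cong refl) (simp add: sh_def)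
      also have "\<dots> = 0"
      proof -
        have "sh n (n - t) c \<in> CA"
          unfolding CA_char
        proof (intro CollectI conjI allI impI ballI)
          fix k assume "k \<ge> n" then show "sh n (n - t) c k = 0" by (simp add: sh_def)
        next
          fix \<gamma> assume "\<gamma> \<in> A"
          then show "ev n (sh n (n - t) c) \<gamma> = 0"
            using ev_shift[OF n_pos] rA c CA_char by blast
        qed
        then show ?thesis using a_in unfolding DA_def dual_code_def by auto
      qed
      finally show ?thesis .
    qed
    have dist: "enat \<delta> \<le> min_dist n (punct C S)"
    proof (rule min_dist_geI)
      fix u assume u: "u \<in> punct C S" and unz: "\<exists>i<n. u i \<noteq> 0"
      then obtain c where c: "c \<in> C" and u_def: "u = (\<lambda>i. if i \<in> S then c i else 0)"
        unfolding punct_def by auto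
      define w where "w = (\<lambda>k. if k < n then a' k * c k else 0)"
      have w_in: "w \<in> CB"
        unfolding CB_char
      proof (intro CollectI conjI allI impI ballI)
        fix k assume "k \<ge> n" then show "w k = 0" by (simp add: w_def)
      next
        fix \<beta> assume bB: "\<beta> \<in> B"
        define c\<beta> where "c\<beta> = (\<lambda>k. if k < n then c k * \<beta> ^ k else 0)"
        have "c\<beta> \<in> CA"
          unfolding CA_char
        proof (intro CollectI conjI allI impI ballI)
          fix k assume "k \<ge> n" then show "c\<beta> k = 0" by (simp add: c\<beta>_def)
        next
          fix \<gamma> assume gA: "\<gamma> \<in> A"
          have "\<gamma> * \<beta> \<in> setprod A B" unfolding setprod_def using gA bB by blast
          then have gb: "\<gamma> * \<beta> \<in> complete_defset n \<alpha> g" using AB_sub by blast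
          then have p0: "poly g (\<gamma> * \<beta>) = 0" and r: "(\<gamma> * \<beta>) ^ n = 1"
            unfolding complete_defset_def using roots_pow[OF alpha_root] by auto
          have "ev n c (\<gamma> * \<beta>) = 0"
            using ideal_code_ev[OF _ n_pos r p0] c C_def' by blast
          moreover have "ev n c\<beta> \<gamma> = ev n c (\<gamma> * \<beta>)"
            unfolding ev_def c\<beta>_def by (intro sum.cong refl) (simp add: power_mult_distrib mult_ac)
          ultimately show "ev n c\<beta> \<gamma> = 0" by simp
        qed
        then have "(\<Sum>k<n. a' k * c\<beta> k) = 0" by (rule a'_dual)
        moreover have "ev n w \<beta> = (\<Sum>k<n. a' k * c\<beta> k)"
          unfolding ev_def w_def c\<beta>_def by (intro sum.cong refl) (simp add: mult_ac)
        ultimately show "ev n w \<beta> = 0" by simp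
      qed
      have sets: "{k. k < n \<and> u k \<noteq> 0} = {k. k < n \<and> w k \<noteq> 0}"
        unfolding u_def w_def S_def by auto
      then have wnz: "\<exists>i<n. w i \<noteq> 0" using unz by blast
      have "min_dist n CB \<le> enat (hweight n w)" by (rule min_dist_le[OF w_in wnz])
      then have "\<delta> \<le> hweight n w" using b_min unfolding \<delta>_def by simp
      then show "\<delta> \<le> hweight n u" unfolding hweight_def sets .
    qed
    show ?thesis unfolding coord_locality_def
      using iS cardS dist Dd unfolding S_def by (intro exI[of _ S]) (auto simp: S_def)
  qed
  have eA: "the_enat (min_dist n (dual_code n (cyclic_code_defset n A))) = D"
    using a_min unfolding DA_def CA_def D_def by simp
  have eB: "the_enat (min_dist n (cyclic_code_defset n B)) = \<delta>"
    using b_min unfolding CB_def \<delta>_def by simp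
  show ?thesis unfolding eA eB has_locality_def using loc d2 by simp
qed

end
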